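(* Let $n\ge2$ and let $N_1,N_2$ be $n\times n$ hermitian matrices over $\mathbb{F}_{q^2}$ of rank $n-1$ with $\operatorname{rank}(N_1-N_2)=1$. If $\{N_1+\lambda\mathbf{y}\mathbf{y}^\ast: 0\neq\lambda\in\mathbb{F}_q\}$ is a leaf of $N_1$, then $\{N_2+\lambda\mathbf{y}\mathbf{y}^\ast: 0\neq\lambda\in\mathbb{F}_q\}$ is a leaf of $N_2$.
   Context: $\mathbb{F}_{q^2}$ is the field with $q^2$ elements with involution $\bar x=x^q$, fixed field $\mathbb{F}_q$; $X^\ast=\bar X^\top$; hermitian means $A^\ast=A$. Leaf: if $A$ is hermitian of rank $s<n$ and $\mathbf{x}$ is not in the column space of $A$, then $\{A+\lambda\mathbf{x}\mathbf{x}^\ast: 0\ne\lambda\in\mathbb{F}_q\}$ is a leaf of $A$. *)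

theory Defs
  imports "Jordan_Normal_Form.DL_Rank"
begin

text \<open>Throughout, the field 'a is finite of cardinality q^2, the involution is x |-> x^q,
  and the fixed field F_q is the set of elements with x^q = x.\<close>

definition conj_tr :: "nat \<Rightarrow> 'a::field mat \<Rightarrow> 'a mat" where
  "conj_tr q A = mat (dim_col A) (dim_row A) (\<lambda>(i,j). (A $$ (j,i)) ^ q)"

definition hermitian_q :: "nat \<Rightarrow> 'a::field mat \<Rightarrow> bool" where
  "hermitian_q q A \<longleftrightarrow> conj_tr q A = A"

definition outer_conj :: "nat \<Rightarrow> 'a::field vec \<Rightarrow> 'a mat" where
  "outer_conj q x = mat (dim_vec x) (dim_vec x) (\<lambda>(i,j). x $ i * (x $ j) ^ q)"

definition col_space :: "'a::field mat \<Rightarrow> 'a vec set" where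
  "col_space A = {A *\<^sub>v v | v. v \<in> carrier_vec (dim_col A)}"

definition leaf_set :: "nat \<Rightarrow> 'a::field mat \<Rightarrow> 'a vec \<Rightarrow> 'a mat set" where
  "leaf_set q A x = {A + smult_mat c (outer_conj q x) | c. c \<noteq> 0 \<and> c ^ q = c}"

definition is_leaf :: "nat \<Rightarrow> nat \<Rightarrow> 'a::field mat \<Rightarrow> 'a mat set \<Rightarrow> bool" where
  "is_leaf q n A S \<longleftrightarrow> A \<in> carrier_mat n n \<and> hermitian_q q A \<and> vec_space.rank n A < n \<and>
     (\<exists>x \<in> carrier_vec n. x \<notin> col_space A \<and> S = leaf_set q A x)"

end

theory Submission
  imports Defs "HOL-Algebra.Sylow" "HOL-Algebra.Multiplicative_Group" "HOL-Computational_Algebra.Primes"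
begin


lemma add_pow_nat: "x [^]\<^bsub>\<lparr>carrier = H, monoid.mult = (+), one = (0::'a::comm_ring_1)\<rparr>\<^esub> (n::nat) = of_nat n * x"
  by (induct n) (simp_all add: nat_pow_def algebra_simps)

lemma card_prime_factor:
  fixes r :: nat
  assumes r: "prime r" and dvd: "r dvd card (UNIV :: 'a::{finite,field} set)"
  shows "r = CHAR('a)"
proof -
  define G where "G = \<lparr> carrier = (UNIV :: 'a set), monoid.mult = (+), one = (0 :: 'a) \<rparr>"
  interpret group G
  proof (rule groupI)
    fix x assume x: "x \<in> carrier G"
    show "\<exists>y\<in>carrier G. y \<otimes>\<^bsub>G\<^esub> x = \<one>\<^bsub>G\<^esub>"
      by (intro bexI[of _ "-x"]) (auto simp: G_def)
  qed (auto simp: G_def add_ac)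
  have ord: "Coset.order G = r ^ 1 * (card (UNIV :: 'a set) div r)" using dvd by (simp add: Coset.order_def G_def)
  obtain H where H: "subgroup H G" "card H = r ^ 1"
    using sylow_thm[OF r group_axioms ord] by (auto simp: G_def)
  have "card H > 1" using H r prime_gt_1_nat by auto
  have "\<not> H \<subseteq> {0}"
  proof
    assume "H \<subseteq> {0}"
    hence "card H \<le> card {0::'a}" by (rule card_mono[rotated]) simp
    thus False using \<open>card H > 1\<close> by simp
  qed
  then obtain x where x: "x \<in> H" "x \<noteq> 0" by blast
  interpret HG: group "G\<lparr>carrier := H\<rparr>" using subgroup.subgroup_is_group[OF H(1) group_axioms] .
  have "x [^]\<^bsub>G\<lparr>carrier := H\<rparr>\<^esub> Coset.order (G\<lparr>carrier := H\<rparr>) = \<one>\<^bsub>G\<lparr>carrier := H\<rparr>\<^esub>"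
    by (rule HG.pow_order_eq_1) (simp add: x)
  moreover have "Coset.order (G\<lparr>carrier := H\<rparr>) = r" using H by (simp add: Coset.order_def)
  ultimately have "of_nat r * x = 0"
    unfolding G_def using add_pow_nat[of H x r] by simp
  hence "(of_nat r :: 'a) = 0" using x by simp
  hence "CHAR('a) dvd r" by (simp add: of_nat_eq_0_iff_char_dvd)
  moreover have "CHAR('a) \<noteq> 1" by simp
  ultimately show ?thesis using r prime_nat_iff by metis
qed

lemma prime_pow_from_factors:
  fixes p :: nat
  assumes "n > 0" "\<And>r. prime r \<Longrightarrow> r dvd n \<Longrightarrow> r = p"
  shows "\<exists>m. n = p ^ m"
  using assms
proof (induction n rule: less_induct)
  case (less n)
  show ?case
  proof (cases "n = 1")
    case True thus ?thesis by (intro exI[of _ 0]) simp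
  next
    case False
    then obtain r where r: "prime r" "r dvd n" using prime_factor_nat by blast
    hence "r = p" using less by blast
    then obtain m where m: "n = p * m" using r by blast
    have "m < n" using m r \<open>r = p\<close> less.prems(1) prime_gt_1_nat
      by (metis One_nat_def mult_less_cancel2 nat_mult_1 gr0I mult_0_right)
    have "m > 0" using m less.prems(1) by auto
    have "\<exists>k. m = p ^ k"
      by (rule less.IH[OF \<open>m < n\<close> \<open>m > 0\<close>]) (use less.prems(2) m in \<open>meson dvd_mult\<close>)
    thus ?thesis using m by (metis power_Suc)
  qed
qed

lemma q_char_pow:
  assumes "card (UNIV :: 'a::{finite,field} set) = q ^ 2"
  shows "prime CHAR('a) \<and> (\<exists>m. q = CHAR('a) ^ m)"
proof -
  have "card (UNIV :: 'a set) \<ge> 2"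
  proof -
    have "card {0::'a,1} \<le> card (UNIV::'a set)" by (rule card_mono) auto
    thus ?thesis by simp
  qed
  hence "q \<noteq> 0" "q \<noteq> 1" using assms by (auto simp: power2_eq_square; metis less_numeral_extra(3) mult_0_right not_gr_zero not_numeral_le_zero)+
  hence q: "q > 1" by linarith
  obtain r where r: "prime r" "r dvd q" using q prime_factor_nat by (metis less_not_refl)
  have "r dvd card (UNIV :: 'a set)" using assms r by (simp add: power2_eq_square)
  hence "r = CHAR('a)" using card_prime_factor r by blast
  moreover have "\<exists>m. q = CHAR('a) ^ m"
    apply (rule prime_pow_from_factors) using \<open>q > 1\<close> apply simp
    using card_prime_factor assms by (metis dvd_mult2 power2_eq_square)
  ultimately show ?thesis using r by auto
qed

lemma finite_field_pow_card:
  fixes x :: "'a :: {finite,field}"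
  shows "x ^ card (UNIV :: 'a set) = x"
proof (cases "x = 0")
  case False
  have "x * (\<Prod>y\<in>UNIV-{0}. x * y) = x * x ^ (card (UNIV :: 'a set) - 1) * \<Prod>(UNIV-{0})"
    by (simp add: prod.distrib mult_ac)
  also have "x * x ^ (card (UNIV :: 'a set) - 1) = x ^ Suc (card (UNIV :: 'a set) - 1)"
    by (subst power_Suc) auto
  also have "Suc (card (UNIV :: 'a set) - 1) = card (UNIV :: 'a set)"
    using finite_UNIV_card_ge_0[where ?'a = 'a] by simp
  also have "(\<Prod>y\<in>UNIV-{0}. x * y) = (\<Prod>y\<in>UNIV-{0}. y)"
    by (rule prod.reindex_bij_witness[of _ "\<lambda>y. y / x" "\<lambda>y. x * y"]) (use False in auto)
  finally show ?thesis
    by simp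
qed (use finite_UNIV_card_ge_0[where ?'a = 'a] in auto)



locale hset =
  fixes q :: nat and ty :: "'a::{finite,field} itself"
  assumes card: "card (UNIV :: 'a set) = q ^ 2"
begin

lemma charq: "prime CHAR('a)" "\<exists>m. q = CHAR('a) ^ m"
  using q_char_pow[OF card] by auto

lemma cadd: "((a::'a) + b) ^ q = a ^ q + b ^ q"
  using charq freshmans_dream' by blast

lemma csum: "(sum (f :: _ \<Rightarrow> 'a) A) ^ q = sum (\<lambda>i. f i ^ q) A"
  using charq freshmans_dream_sum' by blast

lemma cinv: "((a::'a) ^ q) ^ q = a"
  using finite_field_pow_card[of a] card by (simp add: power_mult[symmetric] power2_eq_square)

lemma qpos: "q > 0"
  using card by (cases q) auto

lemma c0[simp]: "(0::'a) ^ q = 0" using qpos by simp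

lemma cinj[simp]: "((a::'a) ^ q = 0) = (a = 0)" using qpos by simp

lemma cmult: "((a::'a) * b) ^ q = a ^ q * b ^ q" by (simp add: power_mult_distrib)

lemma cneg: "(-(a::'a)) ^ q = - (a ^ q)"
proof -
  have "(-a) ^ q + a ^ q = 0" using cadd[of "-a" a] by simp
  thus ?thesis by (simp add: eq_neg_iff_add_eq_0)
qed

lemma cdiff: "((a::'a) - b) ^ q = a ^ q - b ^ q"
  using cadd[of a "-b"] cneg[of b] by simp

lemma ceq: "((a::'a) ^ q = b ^ q) = (a = b)"
proof
  assume "a ^ q = b ^ q"
  hence "(a ^ q) ^ q = (b ^ q) ^ q" by simp
  thus "a = b" by (simp add: cinv)
qed simp

definition cv :: "'a vec \<Rightarrow> 'a vec" where "cv u = vec (dim_vec u) (\<lambda>i. (u $ i) ^ q)"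

lemma cv_carrier[simp]: "u \<in> carrier_vec n \<Longrightarrow> cv u \<in> carrier_vec n"
  unfolding cv_def by auto

lemma cv_index[simp]: "i < dim_vec u \<Longrightarrow> cv u $ i = (u $ i) ^ q" "dim_vec (cv u) = dim_vec u"
  unfolding cv_def by auto

lemma herm_entry:
  assumes "A \<in> carrier_mat n n" "hermitian_q q A" "i < n" "j < n"
  shows "A $$ (i, j) = (A $$ (j, i)) ^ q"
proof -
  have "A $$ (i,j) = conj_tr q A $$ (i,j)" using assms(2) unfolding hermitian_q_def by simp
  thus ?thesis using assms unfolding conj_tr_def by auto
qed

lemma herm_form:
  assumes A: "A \<in> carrier_mat n n" "hermitian_q q A" and u: "u \<in> carrier_vec n" and v: "v \<in> carrier_vec n"
  shows "cv u \<bullet> (A *\<^sub>v v) = (cv v \<bullet> (A *\<^sub>v u)) ^ q"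
proof -
  have "cv u \<bullet> (A *\<^sub>v v) = (\<Sum>i<n. (u $ i) ^ q * (\<Sum>j<n. A $$ (i,j) * v $ j))"
    using A u v unfolding scalar_prod_def mult_mat_vec_def
    by (auto simp: lessThan_atLeast0 intro!: sum.cong)
  also have "\<dots> = (\<Sum>i<n. \<Sum>j<n. (u $ i) ^ q * A $$ (i,j) * v $ j)"
    by (simp add: sum_distrib_left mult.assoc)
  also have "\<dots> = (\<Sum>j<n. \<Sum>i<n. v $ j * ((A $$ (j,i)) ^ q * (u $ i) ^ q))"
    apply (subst sum.swap)
    apply (rule sum.cong[OF refl])+
    subgoal for j i using herm_entry[OF A, of i j] by (simp add: mult_ac)
    done
  also have "\<dots> = (\<Sum>j<n. (v $ j) ^ q * (\<Sum>i<n. A $$ (j,i) * u $ i)) ^ q"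
    by (simp add: csum cmult cinv sum_distrib_left)
  also have "(\<Sum>j<n. (v $ j) ^ q * (\<Sum>i<n. A $$ (j,i) * u $ i)) = cv v \<bullet> (A *\<^sub>v u)"
    using A u v unfolding scalar_prod_def mult_mat_vec_def
    by (auto simp: lessThan_atLeast0 intro!: sum.cong)
  finally show ?thesis .
qed

end


lemma hyp_submodule:
  fixes r :: "'a::field vec"
  assumes r: "r \<in> carrier_vec n"
  shows "submodule class_ring {w \<in> carrier_vec n. r \<bullet> w = 0} (module_vec TYPE('a) n)"
proof -
  interpret V: vec_space "TYPE('a)" n .
  show ?thesis
    unfolding submodule_def
    using vec_module r
    by (auto simp: scalar_prod_add_distrib scalar_prod_smult_distrib class_ring_simps module_vec_simps)
qed

lemma line_submodule:
  fixes w :: "'a::field vec"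
  assumes w: "w \<in> carrier_vec n"
  shows "submodule class_ring {c \<cdot>\<^sub>v w | c. True} (module_vec TYPE('a) n)"
proof -
  interpret V: vec_space "TYPE('a)" n .
  show ?thesis
    unfolding submodule_def
    using vec_module w
    apply (auto simp: class_ring_simps module_vec_simps)
      apply (rule_tac x="c + ca" in exI, simp add: add_smult_distrib_vec)
     apply (rule_tac x="0" in exI, simp)
    apply (rule_tac x="c * ca" in exI, simp add: smult_smult_assoc)
    done
qed

context vec_space
begin

lemma span_cols_eq:
  assumes A: "A \<in> carrier_mat n nc"
  shows "span (set (cols A)) = {y \<in> carrier_vec n. \<exists>x\<in>carrier_vec nc. A *\<^sub>v x = y}"
  using col_space_eq[OF A] A unfolding col_space_def by auto

lemma hyperplane_in_colspace:
  assumes A: "A \<in> carrier_mat n n" and rk: "rank A = n - 1" and n: "n \<ge> 1"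
    and r: "r \<in> carrier_vec n" "r \<noteq> 0\<^sub>v n"
    and orth: "\<And>x. x \<in> carrier_vec n \<Longrightarrow> r \<bullet> (A *\<^sub>v x) = 0"
    and z: "z \<in> carrier_vec n" "r \<bullet> z = 0"
  shows "\<exists>x \<in> carrier_vec n. A *\<^sub>v x = z"
proof (rule ccontr)
  assume nz: "\<not> ?thesis"
  have zW: "z \<notin> span (set (cols A))" using nz span_cols_eq[OF A] by auto
  have li0: "lin_indpt {}" by (simp add: lin_dep_def)
  obtain T where T: "finite T" "maximal T (\<lambda>T. T \<subseteq> set (cols A) \<and> lin_indpt T)"
    using maximal_exists_superset[of "set (cols A)" "(\<lambda>T. T \<subseteq> set (cols A) \<and> lin_indpt T)" "{}"] li0
    by auto
  have cardT: "card T = n - 1" using rank_card_indpt[OF A T(2)] rk by simp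
  have Tc: "T \<subseteq> set (cols A)" "lin_indpt T" using T(2) unfolding maximal_def by auto
  have colsC: "set (cols A) \<subseteq> carrier_vec n" using A cols_dim by blast
  have TC: "T \<subseteq> carrier_vec n" using Tc colsC by blast
  have "span T \<subseteq> span (set (cols A))" using Tc(1) by (rule span_is_monotone)
  hence zT: "z \<notin> span T" using zW by blast
  have znT: "z \<notin> T" using zT in_own_span[OF TC] by blast
  have li: "lin_indpt (T \<union> {z})" using lin_dep_iff_in_span[OF TC Tc(2) z(1) znT] zT by simp
  have cardTz: "card (T \<union> {z}) = n" using T(1) znT cardT n by simp
  have "basis (T \<union> {z})"
    by (rule dim_li_is_basis) (use T(1) TC z(1) li cardTz dim_is_n in auto)
  hence gen: "span (T \<union> {z}) = carrier_vec n" unfolding basis_def by simp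
  define H where "H = {w \<in> carrier_vec n. r \<bullet> w = 0}"
  have subm: "submodule class_ring H V" unfolding H_def using hyp_submodule[OF r(1)] by simp
  have "T \<union> {z} \<subseteq> H"
  proof
    fix w assume "w \<in> T \<union> {z}"
    then consider "w \<in> T" | "w = z" by blast
    thus "w \<in> H"
    proof cases
      case 1
      hence "w \<in> span (set (cols A))" using Tc(1) in_own_span[OF colsC] by blast
      then obtain x where "x \<in> carrier_vec n" "w = A *\<^sub>v x" "w \<in> carrier_vec n"
        using span_cols_eq[OF A] by auto
      thus ?thesis using orth unfolding H_def by auto
    qed (use z in \<open>auto simp: H_def\<close>)
  qed
  hence "span (T \<union> {z}) \<subseteq> H" using subm by (rule span_is_subset)
  hence allH: "carrier_vec n \<subseteq> H" using gen by simp
  obtain i where i: "i < n" "r $ i \<noteq> 0" using r by (metis eq_vecI index_zero_vec carrier_vecD)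
  have "unit_vec n i \<in> H" using allH by auto
  hence "r \<bullet> unit_vec n i = 0" unfolding H_def by simp
  moreover have "r \<bullet> unit_vec n i = r $ i" using r(1) i(1) by (simp add: scalar_prod_right_unit)
  ultimately show False using i by simp
qed


lemma col_in_set_cols: "j < dim_col D \<Longrightarrow> col D j \<in> set (cols D)"
  by (metis cols_length cols_nth nth_mem)

lemma rank1_decomp:
  assumes D: "D \<in> carrier_mat n n" and rk: "rank D = 1"
  shows "\<exists>w c. w \<in> carrier_vec n \<and> w \<noteq> 0\<^sub>v n \<and> (\<forall>i<n. \<forall>j<n. D $$ (i,j) = c j * w $ i)"
proof -
  have "\<exists>j0<n. col D j0 \<noteq> 0\<^sub>v n"
  proof (rule ccontr)
    assume "\<not> ?thesis"
    hence allz: "\<And>j. j < n \<Longrightarrow> col D j = 0\<^sub>v n" by blast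
    have "D = 0\<^sub>m n n"
    proof (rule eq_matI)
      fix i j assume "i < dim_row (0\<^sub>m n n :: 'a mat)" "j < dim_col (0\<^sub>m n n :: 'a mat)"
      hence ij: "i < n" "j < n" by auto
      have "D $$ (i,j) = col D j $ i" using D ij by auto
      also have "\<dots> = 0" using allz[OF ij(2)] ij by simp
      finally show "D $$ (i,j) = 0\<^sub>m n n $$ (i,j)" using ij by simp
    qed (use D in auto)
    hence "rank D = 0" using rank_0I by simp
    thus False using rk by simp
  qed
  then obtain j0 where j0: "j0 < n" "col D j0 \<noteq> 0\<^sub>v n" by blast
  define w where "w = col D j0"
  have wC: "w \<in> carrier_vec n" using D j0 unfolding w_def by auto
  have li0: "lin_indpt {}" by (simp add: lin_dep_def)
  have "w \<notin> span {}" using span_empty j0 unfolding w_def by simp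
  hence li1: "lin_indpt {w}"
    using lin_dep_iff_in_span[of "{}" w] li0 wC by simp
  have inspan: "col D j \<in> span {w}" if j: "j < n" for j
  proof (rule ccontr)
    assume nin: "col D j \<notin> span {w}"
    have cC: "col D j \<in> carrier_vec n" using D j by auto
    have "col D j \<notin> {w}" using nin in_own_span[of "{w}"] wC by auto
    hence li2: "lin_indpt ({w} \<union> {col D j})"
      using lin_dep_iff_in_span[of "{w}" "col D j"] li1 wC cC nin by simp
    have sub: "{w} \<union> {col D j} \<subseteq> set (cols D)"
      using col_in_set_cols[of j0 D] col_in_set_cols[of j D] D j j0 unfolding w_def by auto
    have "card ({w} \<union> {col D j}) \<le> rank D" by (rule rank_ge_card_indpt[OF D sub li2])
    moreover have "card ({w} \<union> {col D j}) = 2" using \<open>col D j \<notin> {w}\<close> by auto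
    ultimately show False using rk by simp
  qed
  have "span {w} \<subseteq> {c \<cdot>\<^sub>v w | c. True}"
  proof (rule span_is_subset)
    show "{w} \<subseteq> {c \<cdot>\<^sub>v w | c. True}" using wC by (auto intro!: exI[of _ 1])
    show "submodule class_ring {c \<cdot>\<^sub>v w | c. True} V" using line_submodule[OF wC] by simp
  qed
  hence ex: "\<forall>j. \<exists>c. j < n \<longrightarrow> col D j = c \<cdot>\<^sub>v w" using inspan by blast
  obtain c where c0: "\<forall>j. j < n \<longrightarrow> col D j = c j \<cdot>\<^sub>v w" using choice[OF ex] by blast
  hence c: "\<And>j. j < n \<Longrightarrow> col D j = c j \<cdot>\<^sub>v w" by blast
  have "\<forall>i<n. \<forall>j<n. D $$ (i,j) = c j * w $ i"
  proof (intro allI impI)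
    fix i j assume ij: "i < n" "j < n"
    have "D $$ (i,j) = col D j $ i" using D ij by auto
    also have "\<dots> = c j * w $ i" using c[OF ij(2)] wC ij(1) by simp
    finally show "D $$ (i,j) = c j * w $ i" .
  qed
  thus ?thesis using wC j0 unfolding w_def by blast
qed

end



lemma zero_smult_vec_carrier: "w \<in> carrier_vec n \<Longrightarrow> (0::'a::field) \<cdot>\<^sub>v w = 0\<^sub>v n"
  by (intro eq_vecI) auto

lemma rank1_apply:
  fixes D :: "'a::field mat"
  assumes D: "D \<in> carrier_mat n n" and dec: "\<forall>i<n. \<forall>j<n. D $$ (i,j) = c j * w $ i"
    and w: "w \<in> carrier_vec n" and u: "u \<in> carrier_vec n"
  shows "D *\<^sub>v u = (\<Sum>j<n. c j * u $ j) \<cdot>\<^sub>v w"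
proof (rule eq_vecI)
  fix i assume "i < dim_vec ((\<Sum>j<n. c j * u $ j) \<cdot>\<^sub>v w)"
  hence i: "i < n" using w by simp
  have "(D *\<^sub>v u) $ i = (\<Sum>j<n. D $$ (i,j) * u $ j)"
    using D u i unfolding mult_mat_vec_def scalar_prod_def
    by (auto simp: lessThan_atLeast0 intro!: sum.cong)
  also have "\<dots> = (\<Sum>j<n. c j * u $ j) * w $ i"
    using dec i by (simp add: sum_distrib_left mult_ac)
  finally show "(D *\<^sub>v u) $ i = ((\<Sum>j<n. c j * u $ j) \<cdot>\<^sub>v w) $ i" using w i by simp
qed (use D w in auto)

lemma kernel_vec:
  fixes A :: "'a::field mat"
  assumes A: "A \<in> carrier_mat n n" and rk: "vec_space.rank n A = n - 1" and n: "n \<ge> 2"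
  shows "\<exists>k. k \<in> carrier_vec n \<and> k \<noteq> 0\<^sub>v n \<and> A *\<^sub>v k = 0\<^sub>v n"
proof -
  have "n - 1 \<noteq> n" using n by simp
  hence "det A = 0" using vec_space.det_rank_iff[OF A] rk by simp
  thus ?thesis using det_0_iff_vec_prod_zero_field[OF A] by blast
qed

lemma nonzero_vec_idx:
  assumes "k \<in> carrier_vec n" "k \<noteq> 0\<^sub>v n"
  shows "\<exists>i<n. k $ i \<noteq> 0"
  using assms by (metis eq_vecI index_zero_vec carrier_vecD)

context hset
begin

lemma cv_unit: "j < n \<Longrightarrow> cv (unit_vec n j) = unit_vec n j"
  by (rule eq_vecI) (auto simp: unit_vec_def qpos)

lemma herm_diff:
  fixes A B :: "'a mat"
  assumes A: "A \<in> carrier_mat n n" "hermitian_q q A" and B: "B \<in> carrier_mat n n" "hermitian_q q B"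
  shows "hermitian_q q (A - B)"
proof -
  have "conj_tr q (A - B) = A - B"
  proof (rule eq_matI)
    fix i j assume "i < dim_row (A - B)" "j < dim_col (A - B)"
    hence ij: "i < n" "j < n" using A B by auto
    have "conj_tr q (A - B) $$ (i,j) = (A $$ (j,i) - B $$ (j,i)) ^ q"
      using A B ij unfolding conj_tr_def by auto
    also have "\<dots> = (A $$ (j,i)) ^ q - (B $$ (j,i)) ^ q" by (rule cdiff)
    also have "\<dots> = A $$ (i,j) - B $$ (i,j)"
      using herm_entry[OF A, of i j] herm_entry[OF B, of i j] ij by simp
    finally show "conj_tr q (A - B) $$ (i,j) = (A - B) $$ (i,j)" using A B ij by simp
  qed (use A B in \<open>auto simp: conj_tr_def\<close>)
  thus ?thesis unfolding hermitian_q_def .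
qed


lemma leaf_not_col:
  fixes N1 :: "'a mat" and y :: "'a vec"
  assumes N1: "N1 \<in> carrier_mat n n" and y: "y \<in> carrier_vec n"
    and leaf: "is_leaf q n N1 (leaf_set q N1 y)"
  shows "y \<notin> col_space N1"
proof
  assume yc: "y \<in> col_space N1"
  from leaf obtain x where x: "x \<in> carrier_vec n" "x \<notin> col_space N1" "leaf_set q N1 y = leaf_set q N1 x"
    unfolding is_leaf_def by blast
  have "N1 + smult_mat 1 (outer_conj q y) \<in> leaf_set q N1 y" unfolding leaf_set_def by auto
  then obtain c where c: "c \<noteq> 0" "c ^ q = c" "N1 + smult_mat 1 (outer_conj q y) = N1 + smult_mat c (outer_conj q x)"
    using x(3) unfolding leaf_set_def by auto
  have ent: "y $ i * (y $ j) ^ q = c * (x $ i * (x $ j) ^ q)" if ij: "i < n" "j < n" for i j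
  proof -
    have "(N1 + smult_mat 1 (outer_conj q y)) $$ (i,j) = (N1 + smult_mat c (outer_conj q x)) $$ (i,j)"
      using c(3) by simp
    thus ?thesis using N1 x y ij by (simp add: outer_conj_def)
  qed
  have "0\<^sub>v n \<in> col_space N1" unfolding col_space_def using N1
    by (auto intro!: exI[of _ "0\<^sub>v n"])
  hence "x \<noteq> 0\<^sub>v n" using x(2) by auto
  then obtain j where j: "j < n" "x $ j \<noteq> 0" using nonzero_vec_idx x(1) by blast
  have "y $ j * (y $ j) ^ q \<noteq> 0" using ent[OF j(1) j(1)] c(1) j(2) by simp
  hence yj: "y $ j \<noteq> 0" by auto
  define s where "s = c * (x $ j) ^ q / (y $ j) ^ q"
  have s0: "s \<noteq> 0" unfolding s_def using c(1) j(2) yj by simp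
  have ys: "y = s \<cdot>\<^sub>v x"
  proof (rule eq_vecI)
    fix i assume "i < dim_vec (s \<cdot>\<^sub>v x)"
    hence i: "i < n" using x by simp
    have "y $ i = c * (x $ i * (x $ j) ^ q) / (y $ j) ^ q"
      using ent[OF i j(1)] yj by (simp add: field_simps)
    thus "y $ i = (s \<cdot>\<^sub>v x) $ i" using i x unfolding s_def by simp
  qed (use x y in auto)
  from yc obtain v where v: "v \<in> carrier_vec n" "y = N1 *\<^sub>v v" unfolding col_space_def using N1 by auto
  have "x = (1 / s) \<cdot>\<^sub>v y" using ys s0 x by (simp add: smult_smult_assoc)
  also have "\<dots> = N1 *\<^sub>v ((1 / s) \<cdot>\<^sub>v v)" using v N1 by (simp add: mult_mat_vec)
  finally have "x \<in> col_space N1" unfolding col_space_def using v N1 by auto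
  thus False using x(2) by simp
qed


lemma main_step:
  fixes N1 N2 :: "'a mat" and y :: "'a vec"
  assumes n: "n \<ge> 2" and N1: "N1 \<in> carrier_mat n n" and N2: "N2 \<in> carrier_mat n n"
    and H1: "hermitian_q q N1" and H2: "hermitian_q q N2"
    and r1: "vec_space.rank n N1 = n - 1" and r2: "vec_space.rank n N2 = n - 1"
    and rD: "vec_space.rank n (N1 - N2) = 1"
    and y: "y \<in> carrier_vec n" and ync: "y \<notin> col_space N1"
  shows "y \<notin> col_space N2"
proof
  assume yc: "y \<in> col_space N2"
  obtain k where k: "k \<in> carrier_vec n" "k \<noteq> 0\<^sub>v n" "N1 *\<^sub>v k = 0\<^sub>v n"
    using kernel_vec[OF N1 r1 n] by blast
  define r where "r = cv k"
  have rC: "r \<in> carrier_vec n" unfolding r_def using k(1) by simp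
  obtain i0 where i0: "i0 < n" "k $ i0 \<noteq> 0" using nonzero_vec_idx[OF k(1,2)] by blast
  have ri: "r $ i = (k $ i) ^ q" if "i < n" for i unfolding r_def using k(1) that by simp
  have r0: "r \<noteq> 0\<^sub>v n"
  proof
    assume "r = 0\<^sub>v n"
    hence "r $ i0 = 0" using i0 by simp
    thus False using ri[OF i0(1)] i0(2) by simp
  qed
  have orth1: "r \<bullet> (N1 *\<^sub>v x) = 0" if x: "x \<in> carrier_vec n" for x
    using herm_form[OF N1 H1 k(1) x] k(3) x unfolding r_def by simp
  have HL: "\<exists>x\<in>carrier_vec n. N1 *\<^sub>v x = z" if "z \<in> carrier_vec n" "r \<bullet> z = 0" for z
    by (rule vec_space.hyperplane_in_colspace[OF N1 r1 _ rC r0 orth1 that]) (use n in auto)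
  define D where "D = N1 - N2"
  have DC: "D \<in> carrier_mat n n" unfolding D_def using N1 N2 by (simp add: minus_carrier_mat)
  have HD: "hermitian_q q D" unfolding D_def by (rule herm_diff[OF N1 H1 N2 H2])
  obtain w c where w: "w \<in> carrier_vec n" "w \<noteq> 0\<^sub>v n" and dec: "\<forall>i<n. \<forall>j<n. D $$ (i,j) = c j * w $ i"
    using vec_space.rank1_decomp[OF DC rD[folded D_def]] by blast
  define lin where "lin u = (\<Sum>j<n. c j * u $ j)" for u :: "'a vec"
  have Dapp: "D *\<^sub>v u = lin u \<cdot>\<^sub>v w" if "u \<in> carrier_vec n" for u
    unfolding lin_def by (rule rank1_apply[OF DC dec w(1) that])
  have Dsplit: "D *\<^sub>v u = N1 *\<^sub>v u - N2 *\<^sub>v u" if "u \<in> carrier_vec n" for u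
    unfolding D_def using N1 N2 that by (rule minus_mult_distrib_mat_vec)
  have link: "lin k = 0"
  proof (rule ccontr)
    assume b: "lin k \<noteq> 0"
    have rw: "r \<bullet> w \<noteq> 0"
    proof
      assume rw0: "r \<bullet> w = 0"
      have "w = 0\<^sub>v n"
      proof (rule eq_vecI)
        fix j assume "j < dim_vec (0\<^sub>v n :: 'a vec)"
        hence j: "j < n" by simp
        have ej: "unit_vec n j \<in> carrier_vec n" by simp
        have "cv k \<bullet> (D *\<^sub>v unit_vec n j) = (cv (unit_vec n j) \<bullet> (D *\<^sub>v k)) ^ q"
          by (rule herm_form[OF DC HD k(1) ej])
        moreover have "cv k \<bullet> (D *\<^sub>v unit_vec n j) = 0"
          using Dapp[OF ej] rw0 w(1) rC unfolding r_def[symmetric] by simp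
        moreover have "cv (unit_vec n j) \<bullet> (D *\<^sub>v k) = lin k * w $ j"
          using cv_unit[OF j] Dapp[OF k(1)] w(1) j by simp
        ultimately have "lin k * w $ j = 0" by simp
        thus "w $ j = 0\<^sub>v n $ j" using b j by simp
      qed (use w in auto)
      thus False using w(2) by simp
    qed
    obtain v where v: "v \<in> carrier_vec n" "v \<noteq> 0\<^sub>v n" "N2 *\<^sub>v v = 0\<^sub>v n"
      using kernel_vec[OF N2 r2 n] by blast
    have N1v: "N1 *\<^sub>v v = D *\<^sub>v v" using Dsplit[OF v(1)] v(3) N1 v(1) by simp
    have "lin v * (r \<bullet> w) = 0" using orth1[OF v(1)] N1v Dapp[OF v(1)] w(1) rC by simp
    hence linv: "lin v = 0" using rw by simp
    hence N1v0: "N1 *\<^sub>v v = 0\<^sub>v n" using N1v Dapp[OF v(1)] w(1) by (simp add: zero_smult_vec_carrier)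
    have propj: "k $ i0 * v $ j = k $ j * v $ i0" if j: "j < n" for j
    proof -
      define z where "z = r $ i0 \<cdot>\<^sub>v unit_vec n j - r $ j \<cdot>\<^sub>v unit_vec n i0"
      have zC: "z \<in> carrier_vec n" unfolding z_def by simp
      have "r \<bullet> z = r $ i0 * r $ j - r $ j * r $ i0"
        unfolding z_def using rC j i0(1)
        by (subst scalar_prod_minus_distrib[of _ n]) auto
      hence "r \<bullet> z = 0" by simp
      then obtain x where x: "x \<in> carrier_vec n" "N1 *\<^sub>v x = z" using HL[OF zC] by blast
      have "cv v \<bullet> z = (cv x \<bullet> (N1 *\<^sub>v v)) ^ q" using herm_form[OF N1 H1 v(1) x(1)] x(2) by simp
      hence "cv v \<bullet> z = 0" using N1v0 x(1) by simp
      moreover have "cv v \<bullet> z = r $ i0 * (v $ j) ^ q - r $ j * (v $ i0) ^ q"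
        unfolding z_def using v(1) j i0(1)
        by (subst scalar_prod_minus_distrib[of _ n]) auto
      ultimately have "(k $ i0) ^ q * (v $ j) ^ q = (k $ j) ^ q * (v $ i0) ^ q"
        using ri[OF i0(1)] ri[OF j] by simp
      hence "(k $ i0 * v $ j) ^ q = (k $ j * v $ i0) ^ q" by (simp add: cmult)
      thus ?thesis using ceq by blast
    qed
    define t where "t = v $ i0 / k $ i0"
    have vt: "v $ j = t * k $ j" if "j < n" for j
      using propj[OF that] i0(2) unfolding t_def by (simp add: field_simps)
    have "lin v = t * lin k" unfolding lin_def
      by (simp add: vt sum_distrib_left mult_ac)
    hence "t = 0" using linv b by simp
    hence "v = 0\<^sub>v n" using vt v(1) by (intro eq_vecI) auto
    thus False using v(2) by simp
  qed
  have Dk: "D *\<^sub>v k = 0\<^sub>v n" using Dapp[OF k(1)] link w(1) by (simp add: zero_smult_vec_carrier)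
  have N2k: "N2 *\<^sub>v k = 0\<^sub>v n"
  proof (rule eq_vecI)
    fix i assume "i < dim_vec (0\<^sub>v n :: 'a vec)"
    hence i: "i < n" by simp
    have "(D *\<^sub>v k) $ i = (N1 *\<^sub>v k) $ i - (N2 *\<^sub>v k) $ i"
      using Dsplit[OF k(1)] N1 N2 i by simp
    thus "(N2 *\<^sub>v k) $ i = 0\<^sub>v n $ i" using Dk k(3) i by simp
  qed (use N2 in simp)
  from yc obtain x where x: "x \<in> carrier_vec n" "y = N2 *\<^sub>v x" unfolding col_space_def using N2 by auto
  have "r \<bullet> y = 0" using herm_form[OF N2 H2 k(1) x(1)] N2k x unfolding r_def by simp
  then obtain x' where "x' \<in> carrier_vec n" "N1 *\<^sub>v x' = y" using HL[OF y] by blast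
  hence "y \<in> col_space N1" unfolding col_space_def using N1 by auto
  thus False using ync by simp
qed

end

theorem lemma3p6:
  fixes q n :: nat and N1 N2 :: "'a::{finite,field} mat" and y :: "'a vec"
  assumes "card (UNIV :: 'a set) = q ^ 2"
    and "n \<ge> 2"
    and "N1 \<in> carrier_mat n n" and "N2 \<in> carrier_mat n n"
    and "hermitian_q q N1" and "hermitian_q q N2"
    and "vec_space.rank n N1 = n - 1" and "vec_space.rank n N2 = n - 1"
    and "vec_space.rank n (N1 - N2) = 1"
    and "y \<in> carrier_vec n"
    and "is_leaf q n N1 (leaf_set q N1 y)"
  shows "is_leaf q n N2 (leaf_set q N2 y)"
proof -
  interpret hset q "TYPE('a)" by standard (rule assms(1))
  have "y \<notin> col_space N1" by (rule leaf_not_col[OF assms(3) assms(10) assms(11)])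
  hence "y \<notin> col_space N2"
    by (rule main_step[OF assms(2-10)])
  moreover have "vec_space.rank n N2 < n" using assms(2,8) by simp
  ultimately show ?thesis unfolding is_leaf_def using assms(4,6,10) by blast
qed

end
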